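(* Let $A\subseteq\mathbb{R}^2$ be a Lebesgue measurable set with $d^*(A)>0$, and let $\alpha>0$. Then there exist points $x,y,z\in A$ which form the vertices of a triangle of area $\alpha$.
   Context: $m$ is Lebesgue measure on $\mathbb{R}^2$ and $Q(x,t)$ is the closed axis-parallel square with centre $x$ and side length $t$. The upper Banach density is $d^*(A):=\limsup_{t\to\infty}\sup_{x\in\mathbb{R}^2}\frac{m(A\cap Q(x,t))}{m(Q(x,t))}$. *)

theory Defs
  imports "HOL-Analysis.Analysis"
begin

definition square :: "real^2 \<Rightarrow> real \<Rightarrow> (real^2) set" where
  "square x t = cbox (x - (t/2) *\<^sub>R One) (x + (t/2) *\<^sub>R One)"

definition upper_banach_density :: "(real^2) set \<Rightarrow> ereal" where
  "upper_banach_density A =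
     Limsup at_top (\<lambda>t::real. SUP x. ereal (measure lebesgue (A \<inter> square x t) / measure lebesgue (square x t)))"

definition triangle_area :: "real^2 \<Rightarrow> real^2 \<Rightarrow> real^2 \<Rightarrow> real" where
  "triangle_area x y z =
     \<bar>(y$1 - x$1) * (z$2 - x$2) - (y$2 - x$2) * (z$1 - x$1)\<bar> / 2"

end

theory Submission
  imports Defs
begin


lemma One_nth2[simp]: "(One :: real^'n) $ i = 1"
  using inner_sum_Basis[of "axis i (1::real)"] by (simp add: cart_eq_inner_axis del: inner_sum_Basis)

lemma measure_square:
  assumes "t \<ge> 0"
  shows "measure lebesgue (square y t) = t^2"
proof -
  have "y \<in> square y t" unfolding square_def
    using assms by (auto simp: mem_box_cart simp del: sum_component)
  then have ne: "square y t \<noteq> {}" by blast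
  have "measure lebesgue (square y t) = Henstock_Kurzweil_Integration.content (square y t)" unfolding square_def by (simp add: measure_completion)
  also have "\<dots> = t^2" unfolding square_def using ne[unfolded square_def]
    by (simp add: content_cbox_cart UNIV_2 power2_eq_square del: sum_component)
  finally show ?thesis .
qed

lemma square_empty:
  assumes "t < 0" shows "square y t = {}"
  unfolding square_def using assms
  by (auto simp: mem_box_cart simp del: sum_component dest!: spec[of _ 1])

lemma density_extract:
  fixes A :: "(real^2) set"
  assumes "upper_banach_density A > 0"
  obtains d where "d > 0" "\<And>T. \<exists>t\<ge>T. t > 0 \<and> (\<exists>y. measure lebesgue (A \<inter> square y t) > d * t^2)"
proof -
  let ?f = "\<lambda>t::real. SUP x. ereal (measure lebesgue (A \<inter> square x t) / measure lebesgue (square x t))"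
  obtain d' where d': "0 < d'" "d' < upper_banach_density A"
    using ereal_dense2[OF assms] by blast
  obtain d where d: "d' = ereal d" "d > 0"
  proof (cases d')
    case (real r) then show ?thesis using d' that by auto
  next
    case PInf then show ?thesis using d' by auto
  next
    case MInf then show ?thesis using d' by auto
  qed
  have freq: "\<exists>t\<ge>T. ?f t > ereal d" for T
  proof (rule ccontr)
    assume "\<not> (\<exists>t\<ge>T. ?f t > ereal d)"
    then have "eventually (\<lambda>t. ?f t \<le> ereal d) at_top"
      by (auto simp: eventually_at_top_linorder not_less intro!: exI[of _ T])
    then have "Limsup at_top ?f \<le> ereal d" by (rule Limsup_bounded)
    then show False using d' d unfolding upper_banach_density_def by simp
  qed
  show ?thesis
  proof (rule that[OF d(2)])
    fix T
    obtain t where t: "t \<ge> T" "?f t > ereal d" using freq by blast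
    then obtain y where y: "ereal (measure lebesgue (A \<inter> square y t) / measure lebesgue (square y t)) > ereal d"
      by (auto simp: less_SUP_iff)
    then have r: "measure lebesgue (A \<inter> square y t) / measure lebesgue (square y t) > d" by simp
    have "t \<noteq> 0 \<and> \<not> t < 0"
    proof
      show "t \<noteq> 0" using r d(2) by (auto simp: measure_square)
      show "\<not> t < 0" using r d(2) square_empty[of t y] by auto
    qed
    then have tp: "t > 0" by auto
    then have "measure lebesgue (A \<inter> square y t) > d * t^2"
      using r by (simp add: measure_square field_simps)
    then show "\<exists>t\<ge>T. t > 0 \<and> (\<exists>y. measure lebesgue (A \<inter> square y t) > d * t^2)"
      using t tp by blast
  qed
qed


lemma shift_lemma:
  fixes E :: "(real^2) set"
  assumes E: "E \<in> sets lebesgue" "bounded E" and "\<epsilon> > 0"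
  obtains \<delta> where "\<delta> > 0"
    "\<And>u C. norm u < \<delta> \<Longrightarrow> C \<in> sets lebesgue \<Longrightarrow> C \<subseteq> E \<Longrightarrow> measure lebesgue C > \<epsilon>
       \<Longrightarrow> \<exists>x\<in>C. x + u \<in> E"
proof -
  have e2: "\<epsilon>/2 > 0" using \<open>\<epsilon>>0\<close> by simp
  obtain U where U: "open U" "E \<subseteq> U" "(U - E) \<in> lmeasurable" "emeasure lebesgue (U - E) < ennreal (\<epsilon>/2)"
    using sets_lebesgue_outer_open[OF E(1) e2] by blast
  obtain K where K: "closed K" "K \<subseteq> E" "E - K \<in> lmeasurable" "emeasure lebesgue (E - K) < ennreal (\<epsilon>/2)"
    using sets_lebesgue_inner_closed[OF E(1) e2] by blast
  have "compact K" using K E(2) bounded_subset compact_eq_bounded_closed by blast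
  then obtain \<delta> where d: "\<delta> > 0" "(\<Union>x\<in>K. ball x \<delta>) \<subseteq> U"
    using compact_subset_open_imp_ball_epsilon_subset[of K U] U K by blast
  have mU: "measure lebesgue (U - E) < \<epsilon>/2"
    using U(3,4) e2 by (simp add: emeasure_eq_measure2 ennreal_less_iff)
  have mK: "measure lebesgue (E - K) < \<epsilon>/2"
    using K(3,4) e2 by (simp add: emeasure_eq_measure2 ennreal_less_iff)
  show ?thesis
  proof (rule that[OF d(1)])
    fix u :: "real^2" and C
    assume u: "norm u < \<delta>" and C: "C \<in> sets lebesgue" "C \<subseteq> E" "measure lebesgue C > \<epsilon>"
    show "\<exists>x\<in>C. x + u \<in> E"
    proof (rule ccontr)
      assume nx: "\<not> (\<exists>x\<in>C. x + u \<in> E)"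
      let ?T = "(\<lambda>x. x - u) ` (U - E)"
      have T: "?T \<in> lmeasurable" using measurable_translation_subtract[OF U(3)] .
      have sub: "C \<subseteq> (E - K) \<union> ?T"
      proof
        fix x assume x: "x \<in> C"
        show "x \<in> (E - K) \<union> ?T"
        proof (cases "x \<in> K")
          case True
          have "x + u \<in> ball x \<delta>" using u by (simp add: dist_norm)
          then have "x + u \<in> U" using d(2) True by blast
          moreover have "x + u \<notin> E" using nx x by blast
          ultimately have "x + u \<in> U - E" by blast
          then have "(x + u) - u \<in> ?T" by blast
          then show ?thesis by simp
        next
          case False then show ?thesis using x C(2) by blast
        qed
      qed
      have "measure lebesgue C \<le> measure lebesgue ((E - K) \<union> ?T)"
        by (rule measure_mono_fmeasurable[OF sub C(1)]) (use K(3) T in blast)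
      also have "\<dots> \<le> measure lebesgue (E - K) + measure lebesgue ?T"
        using K(3) T by (intro measure_Un_le) (auto simp: fmeasurable_def)
      also have "\<dots> < \<epsilon>" using mU mK by (simp add: measure_translation_subtract)
      finally show False using C(3) by simp
    qed
  qed
qed


lemma emeasure_translate_sub:
  fixes S :: "'a::euclidean_space set"
  shows "emeasure lebesgue ((\<lambda>z. z - c) ` S) = emeasure lebesgue S"
proof -
  have "(\<lambda>z. z - c) ` S = (\<lambda>x. 1 *\<^sub>R x + (- c)) ` S" by simp
  then show ?thesis using emeasure_lebesgue_affine[of 1 "-c" S] by simp
qed

lemma square_shift:
  assumes "x \<in> square y0 t0" "z \<in> square y t"
  shows "z - x \<in> square (y - y0) (t + t0)"
  using assms unfolding square_def
  by (auto simp: mem_box_cart field_simps simp del: sum_component) (smt (verit))+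

lemma meas_test:
  fixes E B :: "(real^2) set"
  assumes "E \<in> sets borel" "B \<in> sets borel"
  shows "{x\<in>E. x + v \<in> B} \<in> sets borel"
  using assms by measurable

lemma meas_test':
  fixes Q B :: "(real^2) set"
  assumes "Q \<in> sets borel" "B \<in> sets borel"
  shows "{v\<in>Q. x + v \<in> B} \<in> sets borel"
  using assms by measurable

lemma meas_test2:
  fixes E B Q :: "(real^2) set"
  assumes "E \<in> sets borel" "B \<in> sets borel" "Q \<in> sets borel"
  shows "(\<lambda>(x, v). indicator E x * indicator B (x + v) * indicator Q v :: ennreal) \<in> borel_measurable (lborel \<Otimes>\<^sub>M lborel)"
  using assms by measurable



lemma averaging:
  fixes E B :: "(real^2) set"
  assumes B: "B \<in> sets borel" and E: "E \<in> sets borel" "E \<subseteq> square y0 t0" "t0 \<ge> 0"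
    and muE: "emeasure lborel E = ennreal \<mu>" "\<mu> > 0"
    and d: "d > 0" and R: "R > 0"
    and dens: "\<And>T. \<exists>t\<ge>T. t > 0 \<and> (\<exists>y. measure lebesgue (B \<inter> square y t) > d * t^2)"
  shows "\<exists>v. norm v \<ge> R \<and> emeasure lborel {x\<in>E. x + v \<in> B} \<ge> ennreal (\<mu> * d / 8)"
proof (rule ccontr)
  assume H0: "\<not> ?thesis"
  let ?g = "\<lambda>v. emeasure lborel {x\<in>E. x + v \<in> B}"
  define c where "c = \<mu> * d / 8"
  have c0: "c > 0" using muE d by (simp add: c_def)
  have H: "?g v < ennreal c" if "norm v \<ge> R" for v
  proof (rule ccontr)
    assume "\<not> ?g v < ennreal c"
    then have "?g v \<ge> ennreal c" by (simp add: not_less)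
    then show False using H0 that unfolding c_def by blast
  qed
  obtain t where t: "t \<ge> max t0 (8 * R^2 / d + 1)" "t > 0"
     and ty: "\<exists>y. measure lebesgue (B \<inter> square y t) > d * t^2"
    using dens by blast
  obtain y where y: "measure lebesgue (B \<inter> square y t) > d * t^2" using ty by blast
  define mB where "mB = measure lebesgue (B \<inter> square y t)"
  define Q where "Q = square (y - y0) (t + t0)"
  define Rb :: "(real^2) set" where "Rb = square 0 (2 * R)"
  have mB0: "mB \<ge> 0" unfolding mB_def by simp
  have Qb: "Q \<in> sets borel" unfolding Q_def square_def by simp
  have Rbb: "Rb \<in> sets borel" unfolding Rb_def square_def by simp
  have sqb: "square y t \<in> sets borel" unfolding square_def by simp
  have mQ: "emeasure lborel Q = ennreal ((t + t0)^2)"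
  proof -
    have "emeasure lborel Q = emeasure lebesgue Q" using Qb by simp
    also have "\<dots> = ennreal (measure lebesgue Q)"
      unfolding Q_def square_def by (simp add: emeasure_eq_measure2)
    also have "\<dots> = ennreal ((t + t0)^2)" unfolding Q_def using t E(3) by (simp add: measure_square)
    finally show ?thesis .
  qed
  have mRb: "emeasure lborel Rb = ennreal ((2 * R)^2)"
  proof -
    have "emeasure lborel Rb = emeasure lebesgue Rb" using Rbb by simp
    also have "\<dots> = ennreal (measure lebesgue Rb)"
      unfolding Rb_def square_def by (simp add: emeasure_eq_measure2)
    also have "\<dots> = ennreal ((2 * R)^2)" unfolding Rb_def using R by (simp add: measure_square)
    finally show ?thesis .
  qed
  have meas: "(\<lambda>(x, v). indicator E x * indicator B (x + v) * indicator Q v :: ennreal) \<in> borel_measurable (lborel \<Otimes>\<^sub>M lborel)"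
    using B E(1) Qb by measurable
  have Fub: "(\<integral>\<^sup>+ v. (\<integral>\<^sup>+ x. indicator E x * indicator B (x + v) * indicator Q v \<partial>lborel) \<partial>lborel)
      = (\<integral>\<^sup>+ x. (\<integral>\<^sup>+ v. indicator E x * indicator B (x + v) * indicator Q v \<partial>lborel) \<partial>lborel)"
    using lborel_pair.Fubini'[OF meas] .
  have inner1: "(\<integral>\<^sup>+ x. indicator E x * indicator B (x + v) * indicator Q v \<partial>lborel) = indicator Q v * ?g v" for v
  proof -
    have "(\<integral>\<^sup>+ x. indicator E x * indicator B (x + v) * indicator Q v \<partial>lborel)
        = (\<integral>\<^sup>+ x. indicator Q v * indicator {x\<in>E. x + v \<in> B} x \<partial>lborel)"
      by (intro nn_integral_cong) (auto simp: indicator_def)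
    also have "\<dots> = indicator Q v * ?g v"
      using B E(1) by (intro nn_integral_cmult_indicator) (simp add: meas_test)
    finally show ?thesis .
  qed
  have pw: "indicator Q v * ?g v \<le> ennreal c * indicator Q v + ennreal \<mu> * indicator Rb v" for v
  proof (cases "v \<in> Q")
    case False then show ?thesis by simp
  next
    case True
    show ?thesis
    proof (cases "norm v \<ge> R")
      case True
      then have "?g v \<le> ennreal c" using H less_imp_le by blast
      then show ?thesis using \<open>v \<in> Q\<close> by (simp add: add_increasing2)
    next
      case False
      have "\<bar>v $ i\<bar> < R" for i using component_le_norm_cart[of v i] False by linarith
      then have "v \<in> Rb" unfolding Rb_def square_def
        by (auto simp: mem_box_cart abs_less_iff simp del: sum_component) (smt (verit))+
      moreover have "?g v \<le> emeasure lborel E" using E(1) by (intro emeasure_mono) auto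
      ultimately show ?thesis using \<open>v \<in> Q\<close> muE by (simp add: add_increasing)
    qed
  qed
  have LHS: "(\<integral>\<^sup>+ v. (\<integral>\<^sup>+ x. indicator E x * indicator B (x + v) * indicator Q v \<partial>lborel) \<partial>lborel)
       \<le> ennreal (c * (t + t0)^2) + ennreal (\<mu> * (2 * R)^2)"
  proof -
    have "(\<integral>\<^sup>+ v. (\<integral>\<^sup>+ x. indicator E x * indicator B (x + v) * indicator Q v \<partial>lborel) \<partial>lborel)
        = (\<integral>\<^sup>+ v. indicator Q v * ?g v \<partial>lborel)" by (simp add: inner1)
    also have "\<dots> \<le> (\<integral>\<^sup>+ v. ennreal c * indicator Q v + ennreal \<mu> * indicator Rb v \<partial>lborel)"
      by (intro nn_integral_mono pw)
    also have "\<dots> = (\<integral>\<^sup>+ v. ennreal c * indicator Q v \<partial>lborel) + (\<integral>\<^sup>+ v. ennreal \<mu> * indicator Rb v \<partial>lborel)"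
      using Qb Rbb by (intro nn_integral_add) auto
    also have "\<dots> = ennreal c * emeasure lborel Q + ennreal \<mu> * emeasure lborel Rb"
      using Qb Rbb by (simp add: nn_integral_cmult_indicator)
    also have "\<dots> = ennreal (c * (t + t0)^2) + ennreal (\<mu> * (2 * R)^2)"
      using mQ mRb c0 muE by (simp add: ennreal_mult)
    finally show ?thesis .
  qed
  have inner2: "indicator E x * ennreal mB \<le> (\<integral>\<^sup>+ v. indicator E x * indicator B (x + v) * indicator Q v \<partial>lborel)" for x
  proof (cases "x \<in> E")
    case False then show ?thesis by simp
  next
    case True
    have "(\<integral>\<^sup>+ v. indicator E x * indicator B (x + v) * indicator Q v \<partial>lborel)
        = (\<integral>\<^sup>+ v. indicator {v\<in>Q. x + v \<in> B} v \<partial>lborel)"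
      using True by (intro nn_integral_cong) (auto simp: indicator_def)
    also have "\<dots> = emeasure lborel {v\<in>Q. x + v \<in> B}"
      using B Qb by (intro nn_integral_indicator) (simp add: meas_test')
    also have "\<dots> = emeasure lebesgue {v\<in>Q. x + v \<in> B}"
    proof -
      have "{v\<in>Q. x + v \<in> B} \<in> sets lborel" using B Qb by (simp add: meas_test')
      then show ?thesis by simp
    qed
    finally have eq: "(\<integral>\<^sup>+ v. indicator E x * indicator B (x + v) * indicator Q v \<partial>lborel)
        = emeasure lebesgue {v\<in>Q. x + v \<in> B}" .
    have sub: "(\<lambda>z. z - x) ` (B \<inter> square y t) \<subseteq> {v\<in>Q. x + v \<in> B}"
      using square_shift[of x y0 t0] True E(2) unfolding Q_def by auto
    have setsl: "{v\<in>Q. x + v \<in> B} \<in> sets lebesgue"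
    proof -
      have "{v\<in>Q. x + v \<in> B} \<in> sets lborel" using B Qb by (simp add: meas_test')
      then show ?thesis by simp
    qed
    have "ennreal mB = emeasure lebesgue (B \<inter> square y t)"
      unfolding mB_def
    proof -
      have "B \<inter> square y t \<in> lmeasurable"
      proof (rule bounded_set_imp_lmeasurable)
        show "bounded (B \<inter> square y t)" unfolding square_def by (simp add: bounded_Int)
        show "B \<inter> square y t \<in> sets lebesgue" using B sqb by auto
      qed
      then show "ennreal (measure lebesgue (B \<inter> square y t)) = emeasure lebesgue (B \<inter> square y t)"
        by (simp add: emeasure_eq_measure2)
    qed
    also have "\<dots> = emeasure lebesgue ((\<lambda>z. z - x) ` (B \<inter> square y t))"
      by (simp add: emeasure_translate_sub)
    also have "\<dots> \<le> emeasure lebesgue {v\<in>Q. x + v \<in> B}"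
      by (rule emeasure_mono[OF sub setsl])
    finally show ?thesis using eq True by simp
  qed
  have RHS: "ennreal (\<mu> * mB) \<le> (\<integral>\<^sup>+ x. (\<integral>\<^sup>+ v. indicator E x * indicator B (x + v) * indicator Q v \<partial>lborel) \<partial>lborel)"
  proof -
    have "ennreal (\<mu> * mB) = ennreal mB * emeasure lborel E"
      using muE mB0 by (simp add: ennreal_mult mult.commute)
    also have "\<dots> = (\<integral>\<^sup>+ x. ennreal mB * indicator E x \<partial>lborel)"
      using E(1) by (simp add: nn_integral_cmult_indicator)
    also have "\<dots> \<le> (\<integral>\<^sup>+ x. (\<integral>\<^sup>+ v. indicator E x * indicator B (x + v) * indicator Q v \<partial>lborel) \<partial>lborel)"
      by (intro nn_integral_mono) (use inner2 in \<open>simp add: mult.commute\<close>)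
    finally show ?thesis .
  qed
  have "ennreal (\<mu> * mB) \<le> ennreal (c * (t + t0)^2) + ennreal (\<mu> * (2 * R)^2)"
    using RHS LHS Fub by simp
  then have ineq: "\<mu> * mB \<le> c * (t + t0)^2 + \<mu> * (2 * R)^2"
    using c0 muE by (simp add: ennreal_plus[symmetric] del: ennreal_plus)
  have "(t + t0)^2 \<le> (2 * t)^2" using t E(3) by (intro power_mono) auto
  then have "(t + t0)^2 \<le> 4 * t^2" by (simp add: power_mult_distrib)
  then have "c * (t + t0)^2 \<le> c * (4 * t^2)" using c0 by (simp add: mult_left_mono)
  then have "\<mu> * mB \<le> \<mu> * (d * t^2 / 2) + \<mu> * (4 * R^2)"
    using ineq by (simp add: c_def algebra_simps power2_eq_square)
  note a = this
  have "mB \<le> d * t^2 / 2 + 4 * R^2"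
  proof -
    have "\<mu> * mB \<le> \<mu> * (d * t^2 / 2) + \<mu> * (4 * R^2)" using a .
    have "\<mu> * mB \<le> \<mu> * (d * t^2 / 2 + 4 * R^2)" using a by (simp add: distrib_left)
    then show ?thesis using muE(2) by (rule mult_left_le_imp_le)
  qed
  then have "d * t^2 < 8 * R^2" using y unfolding mB_def by simp
  moreover have "t^2 \<ge> t"
  proof -
    have "8 * R^2 / d \<ge> 0" using d by simp
    then have "t \<ge> 1" using t by simp
    then have "t * 1 \<le> t * t" using t by (intro mult_left_mono) auto
    then show ?thesis by (simp add: power2_eq_square)
  qed
  moreover have "t > 8 * R^2 / d" using t by simp
  moreover have "d * t > 8 * R^2" using \<open>t > 8 * R^2 / d\<close> d by (simp add: field_simps)
  moreover have "d * t \<le> d * t^2" using \<open>t^2 \<ge> t\<close> d by (intro mult_left_mono) auto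
  ultimately show False by linarith
qed



lemma norm2_sq: "(norm (v::real^2))^2 = v$1 * v$1 + v$2 * v$2"
  by (simp add: power2_norm_eq_inner inner_vec_def sum_2)

theorem corollary1p8:
  fixes A :: "(real^2) set" and \<alpha> :: real
  assumes "A \<in> sets lebesgue"
    and "upper_banach_density A > 0"
    and "\<alpha> > 0"
  shows "\<exists>x\<in>A. \<exists>y\<in>A. \<exists>z\<in>A. triangle_area x y z = \<alpha>"
proof -
  obtain d where d: "d > 0" and densA: "\<And>T. \<exists>t\<ge>T. t > 0 \<and> (\<exists>y. measure lebesgue (A \<inter> square y t) > d * t^2)"
    using density_extract[OF assms(2)] by blast
  obtain B N where B: "B \<in> sets borel" "negligible N" "B \<union> N = A"
    using sets_lebesgue_almost_borel[OF assms(1)] by blast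
  have BA: "B \<subseteq> A" using B by blast
  have mBA: "measure lebesgue (B \<inter> square y t) = measure lebesgue (A \<inter> square y t)" for y t
  proof (rule measure_negligible_symdiff)
    show "A \<inter> square y t \<in> lmeasurable"
      unfolding square_def using assms(1) by (intro bounded_set_imp_lmeasurable) (auto simp: bounded_Int)
    show "negligible (sym_diff (A \<inter> square y t) (B \<inter> square y t))"
      by (rule negligible_subset[OF B(2)]) (use B in blast)
  qed
  have dens: "\<And>T. \<exists>t\<ge>T. t > 0 \<and> (\<exists>y. measure lebesgue (B \<inter> square y t) > d * t^2)"
    using densA by (simp add: mBA)
  obtain t0 y0 where t0: "t0 > 0" and my0: "measure lebesgue (B \<inter> square y0 t0) > d * t0^2"
    using dens[of 0] by blast
  define E where "E = B \<inter> square y0 t0"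
  define \<mu> where "\<mu> = measure lebesgue E"
  have Eb: "E \<in> sets borel" unfolding E_def square_def using B by simp
  have Ebd: "bounded E" unfolding E_def square_def by (simp add: bounded_Int)
  have El: "E \<in> lmeasurable" using Eb Ebd by (intro bounded_set_imp_lmeasurable) auto
  have "d * t0^2 > 0" using d t0 by simp
  then have mu0: "\<mu> > 0" unfolding \<mu>_def E_def using my0 by linarith
  have muE: "emeasure lborel E = ennreal \<mu>"
  proof -
    have "emeasure lborel E = emeasure lebesgue E" using Eb by simp
    also have "\<dots> = ennreal \<mu>" unfolding \<mu>_def using El by (simp add: emeasure_eq_measure2)
    finally show ?thesis .
  qed
  define \<epsilon> where "\<epsilon> = \<mu> * d / 16"
  have eps: "\<epsilon> > 0" unfolding \<epsilon>_def using mu0 d by simp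
  obtain \<delta> where dl: "\<delta> > 0" and shift:
    "\<And>u C. norm u < \<delta> \<Longrightarrow> C \<in> sets lebesgue \<Longrightarrow> C \<subseteq> E \<Longrightarrow> measure lebesgue C > \<epsilon>
       \<Longrightarrow> \<exists>x\<in>C. x + u \<in> E"
    using shift_lemma[OF _ Ebd eps] Eb by auto
  define R where "R = 2 * \<alpha> / \<delta> + 1"
  have R0: "R > 0" unfolding R_def using dl assms(3) by (simp add: add_pos_nonneg)
  obtain v where v: "norm v \<ge> R" and gv: "emeasure lborel {x\<in>E. x + v \<in> B} \<ge> ennreal (\<mu> * d / 8)"
    using averaging[OF B(1) Eb _ _ muE mu0 d R0 dens, of y0 t0] t0 unfolding E_def by auto
  define C where "C = {x\<in>E. x + v \<in> B}"
  have Cb: "C \<in> sets borel" unfolding C_def using Eb B(1) by (rule meas_test)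
  have CE: "C \<subseteq> E" unfolding C_def by auto
  have Cfin: "emeasure lborel C \<noteq> \<infinity>"
  proof -
    have "emeasure lborel C \<le> emeasure lborel E" using CE Eb by (intro emeasure_mono) auto
    then show ?thesis using muE by (auto simp: top_unique)
  qed
  have "ennreal (measure lebesgue C) = emeasure lborel C"
  proof -
    have "measure lebesgue C = measure lborel C" using Cb by simp
    then show ?thesis using Cfin by (simp add: emeasure_eq_ennreal_measure)
  qed
  then have "ennreal (\<mu> * d / 8) \<le> ennreal (measure lebesgue C)" using gv by (simp add: C_def)
  then have "measure lebesgue C \<ge> \<mu> * d / 8"
    using ennreal_le_iff[OF measure_nonneg[of lebesgue C]] by blast
  moreover have "\<mu> * d / 8 > \<mu> * d / 16" using mu0 d by simp
  ultimately have mC: "measure lebesgue C > \<epsilon>" unfolding \<epsilon>_def by linarith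
  define N where "N = norm v"
  have N0: "N > 0" unfolding N_def using v R0 by linarith
  define k where "k = 2 * \<alpha> / N^2"
  define u :: "real^2" where "u = vector [- (k * v$2), k * v$1]"
  have NN: "N^2 = v$1 * v$1 + v$2 * v$2" unfolding N_def by (rule norm2_sq)
  have "(norm u)^2 = k^2 * (v$1 * v$1 + v$2 * v$2)"
    unfolding norm2_sq u_def by (simp add: algebra_simps power2_eq_square)
  also have "\<dots> = (k * N)^2" by (simp add: NN[symmetric] power_mult_distrib)
  finally have nu2: "(norm u)^2 = (k * N)^2" .
  have k0: "k > 0" unfolding k_def using assms(3) N0 by simp
  have nu: "norm u = k * N" using nu2 k0 N0 by (simp add: power2_eq_iff_nonneg)
  have "k * N = 2 * \<alpha> / N" unfolding k_def using N0 by (simp add: power2_eq_square)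
  also have "\<dots> < \<delta>"
  proof -
    have "N > 2 * \<alpha> / \<delta>" using v unfolding N_def R_def by simp
    then have "N * \<delta> > 2 * \<alpha>" using dl by (simp add: field_simps)
    then show ?thesis using N0 by (simp add: field_simps)
  qed
  finally have un: "norm u < \<delta>" using nu by simp
  obtain x where x: "x \<in> C" "x + u \<in> E"
    using shift[OF un _ CE mC] Cb by auto
  have xA: "x \<in> A" "x + u \<in> A" "x + v \<in> A"
    using x BA unfolding C_def E_def by auto
  have "triangle_area x (x + u) (x + v) = \<bar>u$1 * v$2 - u$2 * v$1\<bar> / 2"
    unfolding triangle_area_def by simp
  also have "u$1 * v$2 - u$2 * v$1 = - (k * N^2)"
    unfolding u_def NN by (simp add: algebra_simps)
  also have "k * N^2 = 2 * \<alpha>" unfolding k_def using N0 by simp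
  finally have "triangle_area x (x + u) (x + v) = \<alpha>" using assms(3) by simp
  then show ?thesis using xA by blast
qed

end
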